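(* Let $n\geq 5$ be an odd integer, $m=\frac{n+1}{2}$, and let $(D;H)$ be a based diagram of $(K_n;H)$ with $H=v_1v_2\cdots v_nv_1$ such that $M(D;H)=M_n$. Then $$c_D(e_{(m,n)})=c_D(e_{(1,m)})+c_D(e_{(2,n)})+1.$$
   Context: $K_n$ is the complete graph with vertices $v_1,\dots,v_n$, lying on $H$ in this cyclic order. A based diagram $(D;H)$ of $(K_n;H)$ is a diagram of $K_n$ on $S^2$ in which $H$ is drawn on the equator and every other edge diagram lies (apart from its endpoints) in the Northern or Southern Hemisphere; as in the paper's drawings, the edges in each hemisphere are drawn so that two edge diagrams not in $H$ intersect in their interiors if and only if they lie in the same hemisphere and their endpoints alternate along $H$. $e_{(i,j)}$ denotes the edge diagram joining $v_i,v_j$, and for an edge diagram $e$, $c_D(e)$ is the number of edge diagrams of $D$ that intersect the interior of $e$. The matrix $M(D;H)=(a_{(i,j)})$ has $a_{(i,j)}=0$ if $j\le i+1$ or $(i,j)=(1,n)$, and otherwise $a_{(i,j)}=1$ (resp. $-1$) if $e_{(i,j)}$ is in the Northern (resp. Southern) Hemisphere. For odd $n$, $M_n=(a_{(i,j)})$ is the $n\times n$ matrix with $a_{(i,j)}=0$ if $j\le i+1$ or $(i,j)=(1,n)$; otherwise $a_{(i,j)}=1$ if ($j\ge i+2$ and $\frac{n+3}{2}-i\le j\le n-i$) or ($j\ge i+2$ and $j\ge\frac{3n+1}{2}-i$); and $a_{(i,j)}=-1$ in all other cases. *)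

theory Defs
  imports Main
begin

text \<open>Vertices of K_n are 1..n, lying on the Hamiltonian cycle H = v1 v2 ... vn v1
 in this cyclic order. Edge (i,j) is written with i < j.\<close>

datatype hemisphere = North | South

definition is_edge :: "nat \<Rightarrow> nat \<Rightarrow> nat \<Rightarrow> bool" where
  "is_edge n i j \<longleftrightarrow> 1 \<le> i \<and> i < j \<and> j \<le> n"

definition is_H_edge :: "nat \<Rightarrow> nat \<Rightarrow> nat \<Rightarrow> bool" where
  "is_H_edge n i j \<longleftrightarrow> is_edge n i j \<and> (j = i + 1 \<or> (i = 1 \<and> j = n))"

definition non_H_edge :: "nat \<Rightarrow> nat \<Rightarrow> nat \<Rightarrow> bool" where
  "non_H_edge n i j \<longleftrightarrow> is_edge n i j \<and> \<not> is_H_edge n i j"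

text \<open>A based diagram (D;H) of (K_n;H) is determined (as in the paper's drawings) by the
 hemisphere in which each edge not in H is drawn: hem i j for non_H_edge n i j.\<close>

definition alternate :: "nat \<Rightarrow> nat \<Rightarrow> nat \<Rightarrow> nat \<Rightarrow> bool" where
  "alternate i j k l \<longleftrightarrow> (i < k \<and> k < j \<and> j < l) \<or> (k < i \<and> i < l \<and> l < j)"

text \<open>Two edge diagrams not in H intersect in their interiors iff they lie in the same
 hemisphere and their endpoints alternate; edges of H (on the equator) meet the other edge
 diagrams only at endpoints.\<close>
definition cross :: "nat \<Rightarrow> (nat \<Rightarrow> nat \<Rightarrow> hemisphere) \<Rightarrow> nat \<Rightarrow> nat \<Rightarrow> nat \<Rightarrow> nat \<Rightarrow> bool" where
  "cross n hem i j k l \<longleftrightarrow> non_H_edge n i j \<and> non_H_edge n k l \<and>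
      hem i j = hem k l \<and> alternate i j k l"

definition cD :: "nat \<Rightarrow> (nat \<Rightarrow> nat \<Rightarrow> hemisphere) \<Rightarrow> nat \<Rightarrow> nat \<Rightarrow> nat" where
  "cD n hem i j = card {(k, l). is_edge n k l \<and> cross n hem i j k l}"

definition MDH :: "nat \<Rightarrow> (nat \<Rightarrow> nat \<Rightarrow> hemisphere) \<Rightarrow> nat \<Rightarrow> nat \<Rightarrow> int" where
  "MDH n hem i j = (if j \<le> i + 1 \<or> (i = 1 \<and> j = n) then 0
                    else if hem i j = North then 1 else -1)"

definition Mn :: "nat \<Rightarrow> nat \<Rightarrow> nat \<Rightarrow> int" where
  "Mn n i j = (if j \<le> i + 1 \<or> (i = 1 \<and> j = n) then 0
     else if (int j \<ge> int i + 2 \<and> (int n + 3) div 2 - int i \<le> int j \<and> int j \<le> int n - int i)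
           \<or> (int j \<ge> int i + 2 \<and> int j \<ge> (3 * int n + 1) div 2 - int i) then 1
     else -1)"

end

theory Submission
  imports Defs
begin

definition PP :: "nat \<Rightarrow> nat \<Rightarrow> nat \<Rightarrow> nat \<Rightarrow> bool" where
  "PP n m k l \<longleftrightarrow> (m + 1 \<le> k + l \<and> k + l \<le> n) \<or> (k + l + 1 \<ge> 3 * m)"

lemma hemP:
  assumes "odd n" and "n \<ge> 5" and "m = (n + 1) div 2"
    and M: "\<forall>i\<in>{1..n}. \<forall>j\<in>{1..n}. MDH n hem i j = Mn n i j"
    and e: "non_H_edge n k l"
  shows "hem k l = North \<longleftrightarrow> PP n m k l"
proof -
  have nm: "n + 1 = 2 * m" using assms(1,3) by presburger
  have d1: "(int n + 3) div 2 = int m + 1" using nm by presburger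
  have d2: "(3 * int n + 1) div 2 = 3 * int m - 1" using nm by presburger
  have kl: "k \<in> {1..n}" "l \<in> {1..n}" "\<not> (l \<le> k + 1 \<or> (k = 1 \<and> l = n))"
    using e unfolding non_H_edge_def is_H_edge_def is_edge_def by auto
  have eq: "MDH n hem k l = Mn n k l" using M kl by blast
  have "MDH n hem k l = (if hem k l = North then 1 else -1)"
    unfolding MDH_def if_not_P[OF kl(3)] by simp
  moreover have "Mn n k l = (if PP n m k l then 1 else -1)"
    using kl(3) unfolding Mn_def PP_def d1 d2 using nm by auto
  ultimately show ?thesis using eq by (auto split: if_splits)
qed

lemma crossP:
  assumes "odd n" and "n \<ge> 5" and "m = (n + 1) div 2"
    and M: "\<forall>i\<in>{1..n}. \<forall>j\<in>{1..n}. MDH n hem i j = Mn n i j"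
  shows "cross n hem i j k l \<longleftrightarrow> non_H_edge n i j \<and> non_H_edge n k l \<and>
      (PP n m i j \<longleftrightarrow> PP n m k l) \<and> alternate i j k l"
proof -
  have "non_H_edge n i j \<Longrightarrow> non_H_edge n k l \<Longrightarrow>
     (hem i j = hem k l \<longleftrightarrow> (PP n m i j \<longleftrightarrow> PP n m k l))"
    using hemP[OF assms, of i j] hemP[OF assms, of k l] hemisphere.exhaust
    by (metis hemisphere.distinct(1))
  then show ?thesis unfolding cross_def by blast
qed

theorem lemma3p2:
  fixes n m :: nat and hem :: "nat \<Rightarrow> nat \<Rightarrow> hemisphere"
  assumes "odd n" and "n \<ge> 5" and "m = (n + 1) div 2"
    and "\<forall>i\<in>{1..n}. \<forall>j\<in>{1..n}. MDH n hem i j = Mn n i j"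
  shows "cD n hem m n = cD n hem 1 m + cD n hem 2 n + 1"
proof -
  have nm: "n + 1 = 2 * m" using assms(1,3) by presburger
  have m3: "m \<ge> 3" using nm assms(2) by linarith
  define B where "B = {(k, l). 2 \<le> k \<and> m < l \<and> k + l \<le> n}"
  have A0: "{(k, l). is_edge n k l \<and> cross n hem m n k l} =
      {(k, l). (2 \<le> k \<and> m < l \<and> k + l \<le> n) \<or> (k = 1 \<and> m < l \<and> l < n)}"
    unfolding crossP[OF assms]
    apply (rule set_eqI) apply (case_tac x)
    apply (simp add: non_H_edge_def is_H_edge_def is_edge_def alternate_def PP_def)
    using nm by arith
  have A: "{(k, l). is_edge n k l \<and> cross n hem m n k l} = B \<union> Pair (1::nat) ` {m<..<n}"
    unfolding A0 B_def by auto
  have Bs: "{(k, l). is_edge n k l \<and> cross n hem 1 m k l} = B"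
    unfolding crossP[OF assms] B_def
    apply (rule set_eqI) apply (case_tac x)
    apply (simp add: non_H_edge_def is_H_edge_def is_edge_def alternate_def PP_def)
    using nm by arith
  have C0: "{(k, l). is_edge n k l \<and> cross n hem 2 n k l} = {(k, l). k = 1 \<and> 3 \<le> l \<and> l < m}"
    unfolding crossP[OF assms]
    apply (rule set_eqI) apply (case_tac x)
    apply (simp add: non_H_edge_def is_H_edge_def is_edge_def alternate_def PP_def)
    using nm by arith
  have C: "{(k, l). is_edge n k l \<and> cross n hem 2 n k l} = Pair (1::nat) ` {3..<m}"
    unfolding C0 by auto
  have fB: "finite B" unfolding B_def
    by (rule finite_subset[of _ "{..n} \<times> {..n}"]) auto
  have dj: "B \<inter> Pair (1::nat) ` {m<..<n} = {}" unfolding B_def by auto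
  have "cD n hem m n = card B + card (Pair (1::nat) ` {m<..<n})"
    unfolding cD_def A using card_Un_disjoint[OF fB finite_imageI[OF finite_greaterThanLessThan] dj] by simp
  also have "card (Pair (1::nat) ` {m<..<n}) = n - 1 - m"
    by (simp add: card_image inj_on_def)
  finally have 1: "cD n hem m n = card B + (n - 1 - m)" .
  have 2: "cD n hem 1 m = card B" unfolding cD_def Bs ..
  have 3: "cD n hem 2 n = m - 3" unfolding cD_def C
    by (simp add: card_image inj_on_def)
  show ?thesis using 1 2 3 nm m3 by simp
qed

end
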